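(* Let $n \ge 1$ and let $p_0, p_1, \ldots, p_n \in \mathbb{Z}^2$ be integer points with $p_n = p_0$, forming the closed polygon $P = (p_0, p_1, \ldots, p_n)$ (not necessarily simple). Then $$\mathrm{Area}(P) = \sum_{q \in \mathbb{Z}^2} \mathrm{Ang}(P - q).$$
   Context: For $u = (u_1,u_2), v = (v_1,v_2) \in \mathbb{R}^2$ define $\mathrm{area}(u,v) := \tfrac12 (u_1 - v_1)(u_2 + v_2)$, and for a polygon $P = (p_0, \ldots, p_n)$ define $\mathrm{Area}(P) := \sum_{i=1}^n \mathrm{area}(p_{i-1}, p_i)$. The euclidean angle measure $\mathrm{ang} \colon \mathbb{R}^2 \times \mathbb{R}^2 \to (-\tfrac12, \tfrac12)$ is defined as follows: if $|u|\,|v| + u \cdot v > 0$ (so $u, v \ne 0$ and $v \notin u\,\mathbb{R}_{<0}$), let $\theta \in (-\pi, \pi)$ be the unique real number with $\frac{v}{|v|} = \begin{pmatrix} \cos\theta & -\sin\theta \\ \sin\theta & \cos\theta \end{pmatrix} \frac{u}{|u|}$ and set $\mathrm{ang}(u,v) := \theta / (2\pi)$; if $|u|\,|v| + u \cdot v = 0$, set $\mathrm{ang}(u,v) := 0$. For a polygon $P = (p_0, \ldots, p_n)$ define $\mathrm{Ang}(P) := \sum_{i=1}^n \mathrm{ang}(p_{i-1}, p_i)$, and for $q \in \mathbb{R}^2$ let $P - q := (p_0 - q, p_1 - q, \ldots, p_n - q)$. (For a closed polygon only finitely many $q \in \mathbb{Z}^2$ have $\mathrm{Ang}(P-q) \neq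 0$, so the sum is a finite sum.) *)

theory Defs
  imports "HOL-Analysis.Analysis"
begin

definition area :: "real \<times> real \<Rightarrow> real \<times> real \<Rightarrow> real" where
  "area u v = (1/2) * (fst u - fst v) * (snd u + snd v)"

definition eucl_len :: "real \<times> real \<Rightarrow> real" where
  "eucl_len u = sqrt ((fst u)\<^sup>2 + (snd u)\<^sup>2)"

definition dotp :: "real \<times> real \<Rightarrow> real \<times> real \<Rightarrow> real" where
  "dotp u v = fst u * fst v + snd u * snd v"

definition ang :: "real \<times> real \<Rightarrow> real \<times> real \<Rightarrow> real" where
  "ang u v =
    (if eucl_len u * eucl_len v + dotp u v > 0 then
       (THE \<theta>. - pi < \<theta> \<and> \<theta> < pi \<and>
          fst v / eucl_len v = cos \<theta> * (fst u / eucl_len u) - sin \<theta> * (snd u / eucl_len u) \<and>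
          snd v / eucl_len v = sin \<theta> * (fst u / eucl_len u) + cos \<theta> * (snd u / eucl_len u)) / (2 * pi)
     else 0)"

text \<open>A polygon (p_0,...,p_n) is given by a function p on indices 0..n.\<close>
definition Area_poly :: "(nat \<Rightarrow> real \<times> real) \<Rightarrow> nat \<Rightarrow> real" where
  "Area_poly p n = (\<Sum>i = 1..n. area (p (i - 1)) (p i))"

definition Ang_poly :: "(nat \<Rightarrow> real \<times> real) \<Rightarrow> nat \<Rightarrow> real" where
  "Ang_poly p n = (\<Sum>i = 1..n. ang (p (i - 1)) (p i))"

definition shift_poly :: "(nat \<Rightarrow> real \<times> real) \<Rightarrow> real \<times> real \<Rightarrow> nat \<Rightarrow> real \<times> real" where
  "shift_poly p q = (\<lambda>i. p i - q)"

definition int_pt :: "int \<times> int \<Rightarrow> real \<times> real" where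
  "int_pt z = (real_of_int (fst z), real_of_int (snd z))"

end

theory Submission
  imports Defs
begin

definition cpx :: "real \<times> real \<Rightarrow> complex" where
  "cpx u = Complex (fst u) (snd u)"

definition Argp :: "complex \<Rightarrow> real" where
  "Argp z = (if Arg z = pi then 0 else Arg z)"

lemma cpx_eq_0[simp]: "cpx u = 0 \<longleftrightarrow> u = 0"
  by (cases u) (auto simp: cpx_def complex_eq_iff zero_prod_def)

lemma cpx_diff: "cpx (u - v) = cpx u - cpx v"
  by (cases u, cases v) (simp add: cpx_def complex_eq_iff)

lemma eucl_len_cmod: "eucl_len u = cmod (cpx u)"
  by (simp add: eucl_len_def cpx_def cmod_def)

lemma dotp_Re: "dotp u v = Re (cpx v * cnj (cpx u))"
  by (simp add: dotp_def cpx_def)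

lemma ang_Arg: "ang u v = Argp (cpx v / cpx u) / (2 * pi)"
proof -
  define U where "U = cpx u"
  define V where "V = cpx v"
  define W where "W = V * cnj U"
  define z where "z = V / U"
  have lu: "eucl_len u = cmod U" and lv: "eucl_len v = cmod V"
    by (simp_all add: U_def V_def eucl_len_cmod)
  have cond: "eucl_len u * eucl_len v + dotp u v = cmod W + Re W"
    by (simp add: lu lv dotp_Re W_def U_def V_def norm_mult)
  show ?thesis
  proof (cases "cmod W + Re W > 0")
    case True
    have U0: "U \<noteq> 0" using True by (auto simp: W_def)
    have V0: "V \<noteq> 0" using True by (auto simp: W_def)
    have z0: "z \<noteq> 0" using U0 V0 by (simp add: z_def)
    have Wz: "W = z * of_real ((cmod U)\<^sup>2)"
      proof -
      have "W = (V / U) * (U * cnj U)" using U0 by (simp add: W_def)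
      then show ?thesis by (simp only: z_def complex_norm_square)
    qed
    have notpi: "Arg z \<noteq> pi"
    proof
      assume "Arg z = pi"
      then have "Re z < 0" "Im z = 0" by (auto simp: Arg_eq_pi)
      then have "Re W < 0" "Im W = 0" using U0 by (auto simp: Wz mult_neg_pos)
      then have "cmod W = - Re W" by (simp add: cmod_def)
      then show False using True by simp
    qed
    have key: "(- pi < t \<and> t < pi \<and>
          fst v / eucl_len v = cos t * (fst u / eucl_len u) - sin t * (snd u / eucl_len u) \<and>
          snd v / eucl_len v = sin t * (fst u / eucl_len u) + cos t * (snd u / eucl_len u))
          \<longleftrightarrow> (- pi < t \<and> t < pi \<and> sgn z = cis t)" for t
    proof -
      have e1: "(fst v / eucl_len v = cos t * (fst u / eucl_len u) - sin t * (snd u / eucl_len u) \<and>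
          snd v / eucl_len v = sin t * (fst u / eucl_len u) + cos t * (snd u / eucl_len u))
          \<longleftrightarrow> V / of_real (cmod V) = cis t * (U / of_real (cmod U))"
        by (simp add: complex_eq_iff lu lv U_def V_def cpx_def diff_divide_distrib add_divide_distrib algebra_simps)
      have "V / of_real (cmod V) = sgn z * (U / of_real (cmod U))"
      proof -
        have e: "sgn w = w / of_real (cmod w)" for w :: complex
          by (simp add: sgn_div_norm divide_inverse scaleR_conv_of_real mult.commute)
        show ?thesis unfolding z_def
          apply (subst e) using U0 V0 by (simp add: norm_divide field_simps del: sgn_divide)
      qed
      then have "V / of_real (cmod V) = cis t * (U / of_real (cmod U)) \<longleftrightarrow> sgn z = cis t"
        using U0 by (auto simp: field_simps)
      then show ?thesis using e1 by blast
    qed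
    have "(THE t. - pi < t \<and> t < pi \<and>
          fst v / eucl_len v = cos t * (fst u / eucl_len u) - sin t * (snd u / eucl_len u) \<and>
          snd v / eucl_len v = sin t * (fst u / eucl_len u) + cos t * (snd u / eucl_len u)) = Arg z"
      unfolding key
    proof (rule the_equality)
      show "- pi < Arg z \<and> Arg z < pi \<and> sgn z = cis (Arg z)"
        using Arg_correct[OF z0] notpi by auto
    next
      fix t assume "- pi < t \<and> t < pi \<and> sgn z = cis t"
      then show "t = Arg z" using cis_Arg_unique[of z t] by auto
    qed
    then show ?thesis
      using True cond notpi by (simp add: ang_def Argp_def z_def U_def V_def)
  next
    case False
    have "Argp z = 0"
    proof (cases "U = 0 \<or> V = 0")
      case True then show ?thesis by (auto simp: z_def Argp_def Arg_zero)
    next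
      case nz: False
      then have U0: "U \<noteq> 0" and V0: "V \<noteq> 0" by auto
      have Wz: "W = z * of_real ((cmod U)\<^sup>2)"
        proof -
      have "W = (V / U) * (U * cnj U)" using U0 by (simp add: W_def)
      then show ?thesis by (simp only: z_def complex_norm_square)
    qed
      have "\<bar>Re W\<bar> \<le> cmod W" by (rule abs_Re_le_cmod)
      then have "cmod W = - Re W" using False by linarith
      then have "(cmod W)\<^sup>2 = (Re W)\<^sup>2" by simp
      then have "Im W = 0" by (simp add: cmod_power2)
      moreover have "W \<noteq> 0" using U0 V0 by (simp add: W_def)
      ultimately have "Re W < 0" using \<open>cmod W = - Re W\<close>
        by (metis complex_eq_iff neg_0_less_iff_less norm_ge_zero order_le_less zero_complex.simps(1,2) neg_equal_0_iff_equal)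
      have "Re z < 0" "Im z = 0" using \<open>Re W < 0\<close> \<open>Im W = 0\<close> U0
        by (auto simp: Wz zero_less_mult_iff mult_less_0_iff)
      then show ?thesis by (simp add: Argp_def Arg_eq_pi)
    qed
    then show ?thesis using False cond by (simp add: ang_def z_def U_def V_def)
  qed
qed

lemma cpx_inj[simp]: "cpx a = cpx b \<longleftrightarrow> a = b"
  by (cases a, cases b) (simp add: cpx_def)

lemma Argp_real: "z \<in> \<real> \<Longrightarrow> Argp z = 0"
  by (simp add: Argp_def Arg_real)

lemma Im_cpx_div: "Im (cpx v / cpx u) = (fst u * snd v - snd u * fst v) / ((fst u)\<^sup>2 + (snd u)\<^sup>2)"
  by (simp add: Im_divide cpx_def algebra_simps)

lemma ang_anti: "ang u v = - ang v u"
proof -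
  define z where "z = cpx v / cpx u"
  have i: "cpx u / cpx v = inverse z" by (simp add: z_def)
  have "Argp (inverse z) = - Argp z"
  proof (cases "z \<in> \<real>")
    case True
    then show ?thesis by (simp add: Argp_real)
  next
    case False
    then have "Im z \<noteq> 0" using complex_is_Real_iff by blast
    then have "Arg z \<noteq> pi" by (simp add: Arg_eq_pi)
    moreover have "- pi < Arg z" using Arg_bounded by auto
    ultimately show ?thesis using False by (auto simp: Argp_def Arg_inverse)
  qed
  then show ?thesis unfolding ang_Arg i z_def by simp
qed

lemma ang_par: "fst u * snd v - snd u * fst v = 0 \<Longrightarrow> ang u v = 0"
proof -
  assume h: "fst u * snd v - snd u * fst v = 0"
  have "Im (cpx v / cpx u) = 0" by (simp add: Im_cpx_div h)
  then have "cpx v / cpx u \<in> \<real>" by (simp add: complex_is_Real_iff)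
  then show ?thesis by (simp add: ang_Arg Argp_real)
qed

lemma ang_0_left[simp]: "ang 0 v = 0" and ang_0_right[simp]: "ang u 0 = 0"
  by (simp_all add: ang_par)

lemma ang_half:
  assumes x: "Re (cpx x * cnj e) > 0" and y: "Re (cpx y * cnj e) > 0"
  shows "ang x y = (Arg (cpx y * cnj e) - Arg (cpx x * cnj e)) / (2 * pi)"
proof -
  have e0: "e \<noteq> 0"
  proof
    assume "e = 0" then show False using x by simp
  qed
  define rx where "rx = cpx x * cnj e"
  define ry where "ry = cpx y * cnj e"
  have "Re rx > 0" "Re ry > 0" using x y by (simp_all add: rx_def ry_def)
  then have rx0: "rx \<noteq> 0" and ry0: "ry \<noteq> 0" by auto
  have ax: "\<bar>Arg rx\<bar> < pi / 2" using Re_Ln_pos_lt[OF rx0] x rx0 by (simp add: Arg_def rx_def)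
  have ay: "\<bar>Arg ry\<bar> < pi / 2" using Re_Ln_pos_lt[OF ry0] y ry0 by (simp add: Arg_def ry_def)
  have q: "cpx y / cpx x = ry / rx" using e0 by (simp add: rx_def ry_def)
  have A: "Arg (ry / rx) = Arg ry - Arg rx"
    using Arg_divide'[OF ry0 rx0] ax ay by auto
  have "Arg (ry / rx) \<noteq> pi" using A ax ay by auto
  then show ?thesis unfolding ang_Arg q Argp_def using A by (simp add: rx_def ry_def)
qed

lemma ang_halfplane3:
  assumes "Re (cpx x * cnj e) > 0" "Re (cpx y * cnj e) > 0" "Re (cpx w * cnj e) > 0"
  shows "ang x y + ang y w + ang w x = 0"
  using assms by (simp add: ang_half diff_divide_distrib)

lemma zero_outside:
  fixes u v w q :: "real \<times> real"
  assumes "q \<notin> convex hull {u, v, w}"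
  shows "ang (u - q) (v - q) + ang (v - q) (w - q) + ang (w - q) (u - q) = 0"
proof -
  have "convex (convex hull {u, v, w})" by simp
  moreover have "closed (convex hull {u, v, w})"
    by (simp add: compact_imp_closed compact_convex_hull finite_imp_compact)
  ultimately obtain a b where ab: "a \<bullet> q < b" "\<forall>x\<in>convex hull {u, v, w}. b < a \<bullet> x"
    using separating_hyperplane_closed_point assms by blast
  have pos: "Re (cpx (x - q) * cnj (cpx a)) > 0" if "x \<in> {u, v, w}" for x
  proof -
    have "x \<in> convex hull {u, v, w}" using that by (rule hull_inc)
    then have "b < a \<bullet> x" using ab(2) by blast
    then have "a \<bullet> q < a \<bullet> x" using ab(1) by linarith
    then show ?thesis
      by (cases a, cases x, cases q) (simp add: cpx_def inner_prod_def algebra_simps)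
  qed
  show ?thesis by (rule ang_halfplane3[of _ "cpx a"]) (rule pos; simp)+
qed

lemma tri_prod:
  fixes a b c :: complex
  assumes "b \<noteq> a" "c \<noteq> b" "a \<noteq> c"
  shows "(c - a) / (b - a) * ((a - b) / (c - b)) * ((b - c) / (a - c)) = -1"
proof -
  have d: "(b - a) * (c - b) * (a - c) \<noteq> 0" using assms by simp
  have n: "(c - a) * (a - b) * (b - c) = - ((b - a) * (c - b) * (a - c))" by algebra
  have "(c - a) / (b - a) * ((a - b) / (c - b)) * ((b - c) / (a - c))
      = ((c - a) * (a - b) * (b - c)) / ((b - a) * (c - b) * (a - c))" by simp
  also have "\<dots> = -1" unfolding n using d by simp
  finally show ?thesis .
qed

lemma angle_sum:
  fixes u v w :: "real \<times> real"
  assumes D: "(fst v - fst u) * (snd w - snd u) - (snd v - snd u) * (fst w - fst u) > 0"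
  shows "ang (v - u) (w - u) + ang (w - v) (u - v) + ang (u - w) (v - w) = 1 / 2"
proof -
  define A where "A = cpx (w - u) / cpx (v - u)"
  define B where "B = cpx (u - v) / cpx (w - v)"
  define C where "C = cpx (v - w) / cpx (u - w)"
  have pos: "(fst x)\<^sup>2 + (snd x)\<^sup>2 > 0" if "x \<noteq> 0" for x :: "real \<times> real"
  proof -
    have "fst x \<noteq> 0 \<or> snd x \<noteq> 0" using that by (cases x) (auto simp: zero_prod_def)
    then show ?thesis by (auto simp: add_pos_nonneg add_nonneg_pos)
  qed
  have uv: "v - u \<noteq> 0" "w - v \<noteq> 0" "u - w \<noteq> 0" using D
    by (auto simp: zero_prod_def prod_eq_iff)
  have IA: "Im A > 0" unfolding A_def Im_cpx_div
    using D pos[OF uv(1)] by (intro divide_pos_pos) (auto simp: algebra_simps)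
  have IB: "Im B > 0" unfolding B_def Im_cpx_div
    using D pos[OF uv(2)] by (intro divide_pos_pos) (auto simp: algebra_simps)
  have IC: "Im C > 0" unfolding C_def Im_cpx_div
    using D pos[OF uv(3)] by (intro divide_pos_pos) (auto simp: algebra_simps)
  have aA: "0 < Arg A \<and> Arg A < pi" using IA Arg_lt_pi by blast
  have aB: "0 < Arg B \<and> Arg B < pi" using IB Arg_lt_pi by blast
  have aC: "0 < Arg C \<and> Arg C < pi" using IC Arg_lt_pi by blast
  have nz: "A \<noteq> 0" "B \<noteq> 0" "C \<noteq> 0" using IA IB IC by auto
  have prod: "A * B * C = -1"
  proof -
    have c: "cpx v \<noteq> cpx u" "cpx w \<noteq> cpx v" "cpx u \<noteq> cpx w"
      using uv by (auto simp: cpx_diff[symmetric])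
    show ?thesis unfolding A_def B_def C_def cpx_diff by (rule tri_prod[OF c])
  qed
  define s where "s = Ln A + Ln B + Ln C - \<i> * of_real pi"
  have "exp s = A * B * C * exp (- (of_real pi * \<i>))"
    using nz by (simp add: s_def exp_add exp_diff exp_minus divide_inverse mult.commute)
  also have "\<dots> = 1" using prod by (simp add: exp_minus)
  finally obtain k :: int where k: "Im s = of_int (2 * k) * pi" using exp_eq_1 by blast
  have ims: "Im s = Arg A + Arg B + Arg C - pi" using nz by (simp add: s_def Arg_def)
  have "- pi < of_int (2 * k) * pi" "of_int (2 * k) * pi < 2 * pi"
    using ims k aA aB aC by linarith+
  then have k1: "- pi < 2 * real_of_int k * pi" and k2: "2 * real_of_int k * pi < 2 * pi" by simp_all
  have "k > -1"
  proof (rule ccontr)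
    assume "\<not> k > -1"
    then have "real_of_int k \<le> -1" by simp
    then have "real_of_int k * pi \<le> -1 * pi" using pi_gt_zero by (intro mult_right_mono) auto
    then show False using k1 pi_gt_zero by linarith
  qed
  moreover have "k < 1"
  proof (rule ccontr)
    assume "\<not> k < 1"
    then have "real_of_int k \<ge> 1" by simp
    then have "real_of_int k * pi \<ge> 1 * pi" using pi_gt_zero by (intro mult_right_mono) auto
    then show False using k2 pi_gt_zero by linarith
  qed
  ultimately have "k = 0" by linarith
  then have sum: "Arg A + Arg B + Arg C = pi" using ims k by simp
  have "Argp A = Arg A" "Argp B = Arg B" "Argp C = Arg C" using aA aB aC by (auto simp: Argp_def)
  then show ?thesis using sum unfolding ang_Arg A_def[symmetric] B_def[symmetric] C_def[symmetric]
    by (simp add: add_divide_distrib[symmetric])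
qed

definition dt :: "int \<times> int \<Rightarrow> int \<times> int \<Rightarrow> int" where
  "dt u v = fst u * snd v - snd u * fst v"

definition ai :: "int \<times> int \<Rightarrow> int \<times> int \<Rightarrow> real" where
  "ai u v = ang (int_pt u) (int_pt v)"

definition ta :: "int \<times> int \<Rightarrow> int \<times> int \<Rightarrow> int \<times> int \<Rightarrow> int \<times> int \<Rightarrow> real" where
  "ta a b c q = ai (a - q) (b - q) + ai (b - q) (c - q) + ai (c - q) (a - q)"

definition St :: "int \<times> int \<Rightarrow> int \<times> int \<Rightarrow> int \<times> int \<Rightarrow> real" where
  "St a b c = infsum (ta a b c) UNIV"

definition tbox :: "int \<times> int \<Rightarrow> int \<times> int \<Rightarrow> int \<times> int \<Rightarrow> (int \<times> int) set" where
  "tbox a b c = {min (fst a) (min (fst b) (fst c)) .. max (fst a) (max (fst b) (fst c))} \<times>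
               {min (snd a) (min (snd b) (snd c)) .. max (snd a) (max (snd b) (snd c))}"

lemma finite_tbox[simp]: "finite (tbox a b c)"
  by (simp add: tbox_def)

lemma int_pt_diff: "int_pt (a - b) = int_pt a - int_pt b"
  by (simp add: int_pt_def)

lemma int_pt_inj[simp]: "int_pt a = int_pt b \<longleftrightarrow> a = b"
  by (cases a, cases b) (simp add: int_pt_def)

lemma int_pt_0[simp]: "int_pt 0 = 0"
  by (simp add: int_pt_def zero_prod_def)

lemma ai_anti: "ai u v = - ai v u"
  by (simp add: ai_def ang_anti[of "int_pt u"])

lemma ai_par: "dt u v = 0 \<Longrightarrow> ai u v = 0"
  unfolding ai_def dt_def
  by (rule ang_par) (simp add: int_pt_def flip: of_int_mult of_int_diff)

lemma ai_0[simp]: "ai 0 v = 0" "ai u 0 = 0"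
  by (simp_all add: ai_def)

lemma ta_split: "ta a b c q = ta x a b q + ta x b c q + ta x c a q"
  unfolding ta_def
  using ai_anti[of "a - q" "x - q"] ai_anti[of "b - q" "x - q"] ai_anti[of "c - q" "x - q"]
  by simp

lemma ta_swap: "ta a c b q = - ta a b c q"
  unfolding ta_def
  using ai_anti[of "a - q" "b - q"] ai_anti[of "b - q" "c - q"] ai_anti[of "c - q" "a - q"]
  by simp

lemma ta_outside:
  "int_pt q \<notin> convex hull {int_pt a, int_pt b, int_pt c} \<Longrightarrow> ta a b c q = 0"
  unfolding ta_def ai_def int_pt_diff by (rule zero_outside)

lemma conv_bounds:
  fixes u v w x y z :: real
  assumes "0 \<le> u" "0 \<le> v" "0 \<le> w" "u + v + w = 1"
  shows "min x (min y z) \<le> u * x + v * y + w * z" "u * x + v * y + w * z \<le> max x (max y z)"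
proof -
  let ?m = "min x (min y z)" and ?M = "max x (max y z)"
  have "u * ?m \<le> u * x" by (rule mult_left_mono) (simp_all add: assms)
  moreover have "v * ?m \<le> v * y" by (rule mult_left_mono) (simp_all add: assms)
  moreover have "w * ?m \<le> w * z" by (rule mult_left_mono) (simp_all add: assms)
  moreover have "(u + v + w) * ?m = u * ?m + v * ?m + w * ?m" by (simp only: distrib_right)
  ultimately show "?m \<le> u * x + v * y + w * z" using assms(4) by simp
  have "u * x \<le> u * ?M" by (rule mult_left_mono) (simp_all add: assms)
  moreover have "v * y \<le> v * ?M" by (rule mult_left_mono) (simp_all add: assms)
  moreover have "w * z \<le> w * ?M" by (rule mult_left_mono) (simp_all add: assms)
  moreover have "(u + v + w) * ?M = u * ?M + v * ?M + w * ?M" by (simp only: distrib_right)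
  ultimately show "u * x + v * y + w * z \<le> ?M" using assms(4) by simp
qed

lemma hull_tbox:
  assumes "int_pt q \<in> convex hull {int_pt a, int_pt b, int_pt c}"
  shows "q \<in> tbox a b c"
proof -
  obtain u v w where uvw: "0 \<le> u" "0 \<le> v" "0 \<le> w" "u + v + w = 1"
    and q: "int_pt q = u *\<^sub>R int_pt a + v *\<^sub>R int_pt b + w *\<^sub>R int_pt c"
    using assms unfolding convex_hull_3 by blast
  have q1: "real_of_int (fst q) = u * fst a + v * fst b + w * fst c"
    and q2: "real_of_int (snd q) = u * snd a + v * snd b + w * snd c"
    using q by (simp_all add: int_pt_def prod_eq_iff)
  have "real_of_int (min (fst a) (min (fst b) (fst c))) \<le> real_of_int (fst q)"
       "real_of_int (fst q) \<le> real_of_int (max (fst a) (max (fst b) (fst c)))"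
       "real_of_int (min (snd a) (min (snd b) (snd c))) \<le> real_of_int (snd q)"
       "real_of_int (snd q) \<le> real_of_int (max (snd a) (max (snd b) (snd c)))"
    unfolding q1 q2 of_int_min of_int_max using conv_bounds[OF uvw] by auto
  then have "min (fst a) (min (fst b) (fst c)) \<le> fst q" "fst q \<le> max (fst a) (max (fst b) (fst c))"
    "min (snd a) (min (snd b) (snd c)) \<le> snd q" "snd q \<le> max (snd a) (max (snd b) (snd c))"
    by (simp_all only: of_int_le_iff)
  then show ?thesis unfolding tbox_def mem_Times_iff atLeastAtMost_iff by blast
qed

lemma ta_supp: "q \<notin> tbox a b c \<Longrightarrow> ta a b c q = 0"
  using hull_tbox ta_outside by blast

lemma infsum_fin:
  fixes f :: "'a \<Rightarrow> real"
  assumes "finite F" "\<And>x. x \<notin> F \<Longrightarrow> f x = 0"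
  shows "infsum f UNIV = sum f F"
proof -
  have "infsum f UNIV = infsum f F"
    by (rule infsum_cong_neutral) (use assms in auto)
  then show ?thesis using assms(1) by simp
qed

lemma St_sum: "finite F \<Longrightarrow> tbox a b c \<subseteq> F \<Longrightarrow> St a b c = sum (ta a b c) F"
  unfolding St_def by (rule infsum_fin) (auto intro: ta_supp)

lemma St_split: "St a b c = St x a b + St x b c + St x c a"
proof -
  define F where "F = tbox a b c \<union> tbox x a b \<union> tbox x b c \<union> tbox x c a"
  have f: "finite F" by (simp add: F_def)
  have "St a b c = sum (ta a b c) F" by (rule St_sum[OF f]) (auto simp: F_def)
  also have "\<dots> = sum (ta x a b) F + sum (ta x b c) F + sum (ta x c a) F"
    by (simp add: ta_split[of a b c _ x] sum.distrib)
  also have "\<dots> = St x a b + St x b c + St x c a"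
  proof -
    have "tbox x a b \<subseteq> F" "tbox x b c \<subseteq> F" "tbox x c a \<subseteq> F" by (auto simp: F_def)
    then show ?thesis using St_sum[OF f, of x a b] St_sum[OF f, of x b c] St_sum[OF f, of x c a] by simp
  qed
  finally show ?thesis .
qed

lemma St_swap: "St a c b = - St a b c"
proof -
  define F where "F = tbox a b c \<union> tbox a c b"
  have f: "finite F" by (simp add: F_def)
  have "St a c b = sum (ta a c b) F" by (rule St_sum[OF f]) (auto simp: F_def)
  also have "\<dots> = - sum (ta a b c) F" by (simp add: ta_swap[of a b c] sum_negf)
  also have "\<dots> = - St a b c"
  proof -
    have "tbox a b c \<subseteq> F" by (auto simp: F_def)
    then show ?thesis using St_sum[OF f, of a b c] by simp
  qed
  finally show ?thesis .
qed

lemma bary_real: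
  fixes xa ya xb yb xc yc u v w :: real
  assumes "u + v + w = 1"
  shows "(xb - (u * xa + v * xb + w * xc)) * (yc - (u * ya + v * yb + w * yc)) - (yb - (u * ya + v * yb + w * yc)) * (xc - (u * xa + v * xb + w * xc)) = u * ((xb - xa) * (yc - ya) - (yb - ya) * (xc - xa))"
    and "(xc - (u * xa + v * xb + w * xc)) * (ya - (u * ya + v * yb + w * yc)) - (yc - (u * ya + v * yb + w * yc)) * (xa - (u * xa + v * xb + w * xc)) = v * ((xb - xa) * (yc - ya) - (yb - ya) * (xc - xa))"
    and "(xa - (u * xa + v * xb + w * xc)) * (yb - (u * ya + v * yb + w * yc)) - (ya - (u * ya + v * yb + w * yc)) * (xb - (u * xa + v * xb + w * xc)) = w * ((xb - xa) * (yc - ya) - (yb - ya) * (xc - xa))"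
proof -
  have u: "u = 1 - v - w" using assms(1) by simp
  show "(xb - (u * xa + v * xb + w * xc)) * (yc - (u * ya + v * yb + w * yc)) - (yb - (u * ya + v * yb + w * yc)) * (xc - (u * xa + v * xb + w * xc)) = u * ((xb - xa) * (yc - ya) - (yb - ya) * (xc - xa))"
    unfolding u by algebra
  show "(xc - (u * xa + v * xb + w * xc)) * (ya - (u * ya + v * yb + w * yc)) - (yc - (u * ya + v * yb + w * yc)) * (xa - (u * xa + v * xb + w * xc)) = v * ((xb - xa) * (yc - ya) - (yb - ya) * (xc - xa))"
    unfolding u by algebra
  show "(xa - (u * xa + v * xb + w * xc)) * (yb - (u * ya + v * yb + w * yc)) - (ya - (u * ya + v * yb + w * yc)) * (xb - (u * xa + v * xb + w * xc)) = w * ((xb - xa) * (yc - ya) - (yb - ya) * (xc - xa))"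
    unfolding u by algebra
qed

lemma of_int_dt: "real_of_int (dt u v) = real_of_int (fst u) * real_of_int (snd v) - real_of_int (snd u) * real_of_int (fst v)"
  by (simp add: dt_def)

lemma hull_dets:
  assumes "int_pt q \<in> convex hull {int_pt a, int_pt b, int_pt c}"
  obtains u v w where "0 \<le> u" "0 \<le> v" "0 \<le> w" "u + v + w = 1"
    "int_pt q = u *\<^sub>R int_pt a + v *\<^sub>R int_pt b + w *\<^sub>R int_pt c"
    "real_of_int (dt (b - q) (c - q)) = u * real_of_int (dt (b - a) (c - a))"
    "real_of_int (dt (c - q) (a - q)) = v * real_of_int (dt (b - a) (c - a))"
    "real_of_int (dt (a - q) (b - q)) = w * real_of_int (dt (b - a) (c - a))"
proof -
  obtain u v w where uvw: "0 \<le> u" "0 \<le> v" "0 \<le> w" "u + v + w = 1"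
    and q: "int_pt q = u *\<^sub>R int_pt a + v *\<^sub>R int_pt b + w *\<^sub>R int_pt c"
    using assms unfolding convex_hull_3 by blast
  have q1: "real_of_int (fst q) = u * fst a + v * fst b + w * fst c"
    and q2: "real_of_int (snd q) = u * snd a + v * snd b + w * snd c"
    using q by (simp_all add: int_pt_def prod_eq_iff)
  note B = bary_real[where xa="real_of_int (fst a)" and ya="real_of_int (snd a)" and xb="real_of_int (fst b)" and yb="real_of_int (snd b)" and xc="real_of_int (fst c)" and yc="real_of_int (snd c)", OF uvw(4)]
  show ?thesis
    apply (rule that[OF uvw q])
    unfolding of_int_dt fst_diff snd_diff of_int_diff q1 q2 using B by simp_all
qed

lemma ta_degen:
  assumes "dt (b - a) (c - a) = 0"
  shows "ta a b c q = 0"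
proof (cases "int_pt q \<in> convex hull {int_pt a, int_pt b, int_pt c}")
  case True
  then obtain u v w where
    "real_of_int (dt (b - q) (c - q)) = u * real_of_int (dt (b - a) (c - a))"
    "real_of_int (dt (c - q) (a - q)) = v * real_of_int (dt (b - a) (c - a))"
    "real_of_int (dt (a - q) (b - q)) = w * real_of_int (dt (b - a) (c - a))"
    by (rule hull_dets)
  then have "dt (b - q) (c - q) = 0" "dt (c - q) (a - q) = 0" "dt (a - q) (b - q) = 0"
    using assms by simp_all
  then show ?thesis by (simp add: ta_def ai_par)
next
  case False
  then show ?thesis by (rule ta_outside)
qed

lemma dt_sum: "dt (a - x) (b - x) + dt (b - x) (c - x) + dt (c - x) (a - x) = dt (b - a) (c - a)"
  by (simp add: dt_def algebra_simps)

lemma tri1: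
  assumes D: "dt (b - a) (c - a) = 1"
  shows "St a b c = 1 / 2"
proof -
  have supp: "ta a b c q = 0" if "q \<notin> {a, b, c}" for q
  proof (cases "int_pt q \<in> convex hull {int_pt a, int_pt b, int_pt c}")
    case False
    then show ?thesis by (rule ta_outside)
  next
    case True
    then obtain u v w where uvw: "0 \<le> u" "0 \<le> v" "0 \<le> w" "u + v + w = 1"
      and q: "int_pt q = u *\<^sub>R int_pt a + v *\<^sub>R int_pt b + w *\<^sub>R int_pt c"
      and du: "real_of_int (dt (b - q) (c - q)) = u * real_of_int (dt (b - a) (c - a))"
      and dv: "real_of_int (dt (c - q) (a - q)) = v * real_of_int (dt (b - a) (c - a))"
      and dw: "real_of_int (dt (a - q) (b - q)) = w * real_of_int (dt (b - a) (c - a))"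
      by (rule hull_dets)
    define i where "i = dt (b - q) (c - q)"
    define j where "j = dt (c - q) (a - q)"
    define k where "k = dt (a - q) (b - q)"
    have ui: "u = of_int i" and vj: "v = of_int j" and wk: "w = of_int k"
      using du dv dw D by (simp_all add: i_def j_def k_def)
    have "i \<ge> 0" "j \<ge> 0" "k \<ge> 0" "i + j + k = 1"
      using uvw unfolding ui vj wk by (simp_all flip: of_int_add)
    then have "(i = 1 \<and> j = 0 \<and> k = 0) \<or> (i = 0 \<and> j = 1 \<and> k = 0) \<or> (i = 0 \<and> j = 0 \<and> k = 1)"
      by linarith
    then have "int_pt q = int_pt a \<or> int_pt q = int_pt b \<or> int_pt q = int_pt c"
      using q unfolding ui vj wk by auto
    then show ?thesis using that by auto
  qed
  have ab: "a \<noteq> b" "b \<noteq> c" "a \<noteq> c" using D by (auto simp: dt_def)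
  have "St a b c = sum (ta a b c) {a, b, c}"
    unfolding St_def by (rule infsum_fin) (use supp in auto)
  also have "\<dots> = ta a b c a + ta a b c b + ta a b c c"
    using ab by simp
  also have "\<dots> = ai (b - a) (c - a) + ai (c - b) (a - b) + ai (a - c) (b - c)"
    by (simp add: ta_def)
  also have "\<dots> = 1 / 2"
    unfolding ai_def int_pt_diff
  proof (rule angle_sum)
    have "real_of_int (dt (b - a) (c - a)) > 0" using D by simp
    then show "0 < (fst (int_pt b) - fst (int_pt a)) * (snd (int_pt c) - snd (int_pt a)) -
        (snd (int_pt b) - snd (int_pt a)) * (fst (int_pt c) - fst (int_pt a))"
      by (simp add: of_int_dt int_pt_def)
  qed
  finally show ?thesis .
qed

lemma dt_shift:
  "dt (a - (a + X)) (b - (a + X)) = dt (b - a) X"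
  "dt (c - (a + X)) (a - (a + X)) = dt X (c - a)"
  by (simp_all add: dt_def algebra_simps)

lemma find_X:
  fixes A B :: "int \<times> int"
  assumes d: "dt A B = d" "d \<ge> 2"
  shows "\<exists>X. 0 \<le> dt A X \<and> dt A X < d \<and> 0 \<le> dt X B \<and> dt X B < d \<and>
              0 \<le> d - dt A X - dt X B \<and> d - dt A X - dt X B < d"
proof -
  define g where "g = gcd (fst A) (snd A)"
  have A0: "A \<noteq> 0" using d by (auto simp: dt_def zero_prod_def)
  then have "fst A \<noteq> 0 \<or> snd A \<noteq> 0" by (cases A) (auto simp: zero_prod_def)
  then have gpos: "g > 0" by (auto simp: g_def)
  show ?thesis
  proof (cases "g = 1")
    case True
    obtain s t where st: "s * fst A + t * snd A = 1" using bezout_int[of "fst A" "snd A"] True g_def by auto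
    define X0 where "X0 = (- t, s)"
    have dX0: "dt A X0 = 1" using st by (simp add: dt_def X0_def algebra_simps)
    define k0 where "k0 = dt B X0"
    define k where "k = (k0 + d - 1) div d"
    define r where "r = (k0 + d - 1) mod d"
    have kr: "k0 + d - 1 = k * d + r" by (simp add: k_def r_def)
    have r: "0 \<le> r" "r < d" using d by (simp_all add: r_def)
    define X where "X = (k * fst A + fst X0, k * snd A + snd X0)"
    have e1: "dt A X = 1" using dX0 by (simp add: X_def dt_def algebra_simps)
    have e2: "dt X B = k * d - k0" using d by (simp add: X_def dt_def k0_def algebra_simps)
    show ?thesis
      by (rule exI[of _ X]) (use e1 e2 kr r d in auto)
  next
    case False
    then have g2: "g \<ge> 2" using gpos by simp
    define X where "X = (fst A div g, snd A div g)"
    have AX: "A = (g * fst X, g * snd X)"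
      by (simp add: X_def g_def)
    have e1: "dt A X = 0" by (subst AX) (simp add: dt_def)
    define e where "e = dt X B"
    have de: "d = g * e" unfolding d(1)[symmetric] e_def by (subst AX) (simp add: dt_def algebra_simps)
    have "0 < g * e" using de d(2) by simp
    then have "e > 0" using gpos by (simp add: zero_less_mult_iff)
    moreover have "2 * e \<le> g * e" using g2 \<open>e > 0\<close> by (intro mult_right_mono) auto
    ultimately show ?thesis
      by (intro exI[of _ X]) (use e1 de e_def in auto)
  qed
qed

lemma tri_nat: "dt (b - a) (c - a) = int d \<Longrightarrow> St a b c = real d / 2"
proof (induction d arbitrary: a b c rule: less_induct)
  case (less d)
  consider "d = 0" | "d = 1" | "d \<ge> 2" by linarith
  then show ?case
  proof cases
    case 1
    then have "ta a b c = (\<lambda>_. 0)" using less.prems by (auto intro: ta_degen)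
    then show ?thesis using 1 by (simp add: St_def)
  next
    case 2
    then show ?thesis using tri1 less.prems by simp
  next
    case 3
    obtain X where X: "0 \<le> dt (b - a) X" "dt (b - a) X < int d" "0 \<le> dt X (c - a)" "dt X (c - a) < int d"
       "0 \<le> int d - dt (b - a) X - dt X (c - a)" "int d - dt (b - a) X - dt X (c - a) < int d"
      using find_X[OF less.prems] 3 by auto
    define x where "x = a + X"
    have d1: "dt (a - x) (b - x) = dt (b - a) X" and d3: "dt (c - x) (a - x) = dt X (c - a)"
      unfolding x_def by (rule dt_shift)+
    have d2: "dt (b - x) (c - x) = int d - dt (b - a) X - dt X (c - a)"
      using dt_sum[of a x b c] d1 d3 less.prems by linarith
    have "St x a b = real (nat (dt (b - a) X)) / 2"
      by (rule less.IH) (use X d1 in auto)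
    moreover have "St x b c = real (nat (int d - dt (b - a) X - dt X (c - a))) / 2"
      by (rule less.IH) (use X d2 in auto)
    moreover have "St x c a = real (nat (dt X (c - a))) / 2"
      by (rule less.IH) (use X d3 in auto)
    ultimately have "St a b c = (real (nat (dt (b - a) X)) + real (nat (int d - dt (b - a) X - dt X (c - a)))
        + real (nat (dt X (c - a)))) / 2"
      using St_split[of a b c x] by (simp add: add_divide_distrib)
    also have "\<dots> = real d / 2" using X by (simp add: of_nat_nat)
    finally show ?thesis .
  qed
qed

lemma tri: "St a b c = real_of_int (dt (b - a) (c - a)) / 2"
proof (cases "dt (b - a) (c - a) \<ge> 0")
  case True
  then show ?thesis using tri_nat[of b a c "nat (dt (b - a) (c - a))"] by simp
next
  case False
  have "dt (c - a) (b - a) = - dt (b - a) (c - a)" by (simp add: dt_def)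
  then have "St a c b = real_of_int (- dt (b - a) (c - a)) / 2"
    using tri_nat[of c a b "nat (- dt (b - a) (c - a))"] False by simp
  then show ?thesis using St_swap[of a c b] by simp
qed

lemma tele:
  fixes f :: "nat \<Rightarrow> real" and n :: nat
  shows "(\<Sum>i = 1..n. f i - f (i - 1)) = f n - f 0"
  by (induction n) (simp_all add: sum.cl_ivl_Suc)

lemma area_anti: "area u v = - area v u"
  unfolding area_def by (simp add: field_simps)

lemma area_tri: "area (int_pt a) (int_pt b) + area (int_pt b) (int_pt c) + area (int_pt c) (int_pt a)
   = real_of_int (dt (b - a) (c - a)) / 2"
  unfolding area_def int_pt_def dt_def by (simp add: field_simps)

theorem lemma2p5:
  fixes p :: "nat \<Rightarrow> int \<times> int" and n :: nat
  assumes "n \<ge> 1" and "p n = p 0"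
  shows "Area_poly (int_pt \<circ> p) n =
         (\<Sum>\<^sub>\<infinity> q :: int \<times> int. Ang_poly (shift_poly (int_pt \<circ> p) (int_pt q)) n)"
proof -
  define T where "T i = real_of_int (dt (p (i - 1) - p 0) (p i - p 0)) / 2" for i
  have LHS: "Area_poly (int_pt \<circ> p) n = (\<Sum>i = 1..n. T i)"
  proof -
    define h where "h i = area (int_pt (p i)) (int_pt (p 0))" for i
    have "T i = area (int_pt (p (i - 1))) (int_pt (p i)) + (h i - h (i - 1))" for i
      unfolding T_def h_def using area_tri[of "p 0" "p (i - 1)" "p i"] area_anti[of "int_pt (p 0)" "int_pt (p (i - 1))"]
      by simp
    then have "(\<Sum>i = 1..n. T i) = Area_poly (int_pt \<circ> p) n + (\<Sum>i = 1..n. h i - h (i - 1))"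
      by (simp add: Area_poly_def sum.distrib)
    also have "(\<Sum>i = 1..n. h i - h (i - 1)) = 0" by (subst tele) (simp add: h_def assms(2))
    finally show ?thesis by (simp add: comp_def)
  qed
  have pt: "Ang_poly (shift_poly (int_pt \<circ> p) (int_pt q)) n = (\<Sum>i = 1..n. ta (p 0) (p (i - 1)) (p i) q)" for q
  proof -
    define h where "h i = ai (p i - q) (p 0 - q)" for i
    have "ta (p 0) (p (i - 1)) (p i) q = ai (p (i - 1) - q) (p i - q) + (h i - h (i - 1))" for i
      unfolding ta_def h_def using ai_anti[of "p 0 - q" "p (i - 1) - q"] by simp
    then have "(\<Sum>i = 1..n. ta (p 0) (p (i - 1)) (p i) q) =
        (\<Sum>i = 1..n. ai (p (i - 1) - q) (p i - q)) + (\<Sum>i = 1..n. h i - h (i - 1))"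
      by (simp add: sum.distrib)
    also have "(\<Sum>i = 1..n. h i - h (i - 1)) = 0" by (subst tele) (simp add: h_def assms(2))
    finally show ?thesis
      by (simp add: Ang_poly_def shift_poly_def ai_def int_pt_diff)
  qed
  define F where "F = (\<Union>i\<in>{1..n}. tbox (p 0) (p (i - 1)) (p i))"
  have fF: "finite F" by (simp add: F_def)
  have sub: "tbox (p 0) (p (i - 1)) (p i) \<subseteq> F" if "i \<in> {1..n}" for i
    using that by (auto simp: F_def)
  have "(\<Sum>\<^sub>\<infinity> q. Ang_poly (shift_poly (int_pt \<circ> p) (int_pt q)) n)
      = (\<Sum>\<^sub>\<infinity> q. (\<Sum>i = 1..n. ta (p 0) (p (i - 1)) (p i) q))"
    by (simp add: pt)
  also have "\<dots> = (\<Sum>q\<in>F. (\<Sum>i = 1..n. ta (p 0) (p (i - 1)) (p i) q))"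
  proof (rule infsum_fin[OF fF])
    fix q assume "q \<notin> F"
    then have "q \<notin> tbox (p 0) (p (i - 1)) (p i)" if "i \<in> {1..n}" for i
      using sub[OF that] by blast
    then show "(\<Sum>i = 1..n. ta (p 0) (p (i - 1)) (p i) q) = 0"
      by (intro sum.neutral) (auto intro: ta_supp)
  qed
  also have "\<dots> = (\<Sum>i = 1..n. (\<Sum>q\<in>F. ta (p 0) (p (i - 1)) (p i) q))"
    by (rule sum.swap)
  also have "\<dots> = (\<Sum>i = 1..n. St (p 0) (p (i - 1)) (p i))"
    by (rule sum.cong[OF refl]) (rule St_sum[OF fF sub, symmetric])
  also have "\<dots> = (\<Sum>i = 1..n. T i)"
    by (simp add: tri T_def)
  finally show ?thesis using LHS by simp
qed

end
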